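(* Let $N\ge1$, $M\in\mathbb{N}^*$, $s>0$, $p\in[1,\infty]$, let $(\rho_\varepsilon)_{\varepsilon>0}\subset L^1(\mathbb{R}^N)$ be a family of mollifiers and let $\omega\in C^+_{\mathrm{inc}}$. For $f\in L^p(\mathbb{R}^N)$ set $\mathscr{D}_\omega(\rho_\varepsilon,f):=\int_{\mathbb{R}^N}\rho_\varepsilon(h)\,\omega\big(|h|^{-s}\|\Delta_h^Mf\|_{L^p(\mathbb{R}^N)}\big)\mathrm{d}h$. Then \[\limsup_{\varepsilon\downarrow0}\mathscr{D}_\omega(\rho_\varepsilon,f)\le\omega\left(\limsup_{|h|\to0}\frac{\|\Delta_h^Mf\|_{L^p(\mathbb{R}^N)}}{|h|^s}\right)\quad\text{and}\quad \sup_{\varepsilon>0}\mathscr{D}_\omega(\rho_\varepsilon,f)\le\omega\left(\sup_{h\ne0}\frac{\|\Delta_h^Mf\|_{L^p(\mathbb{R}^N)}}{|h|^s}\right).\]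
   Context: Mollifiers: $\rho_\varepsilon\ge0$, $\int\rho_\varepsilon=1$, and $\lim_{\varepsilon\downarrow0}\int_{|z|\ge\delta}\rho_\varepsilon=0$ for all $\delta>0$. $\Delta_h^Mf(x):=\sum_{j=0}^M(-1)^{M-j}\binom{M}{j}f(x+jh)$. $C^+_{\mathrm{inc}}$ is the set of continuous increasing $\omega:[0,\infty)\to[0,\infty)$ with $\omega(0)=0$, $\lim_{t\to\infty}\omega(t)=\infty$, and roughly subadditive: there is $A>0$ with $\omega(t_1+t_2)\le A(\omega(t_1)+\omega(t_2))$ for all $t_1,t_2\ge0$. Convention $\omega(+\infty)=+\infty$. *)

theory Defs
  imports "HOL-Analysis.Analysis"
begin

text \<open>L^p norm (as an extended nonnegative real) w.r.t. Lebesgue measure,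
  for an exponent p in [1, infinity] represented as an ennreal (top = infinity).\<close>
definition Lp_norm :: "ennreal \<Rightarrow> ('a::euclidean_space \<Rightarrow> real) \<Rightarrow> ennreal" where
  "Lp_norm p f =
     (if p = top then Inf {C. AE x in lebesgue. ennreal \<bar>f x\<bar> \<le> C}
      else (let I = (\<integral>\<^sup>+ x. ennreal (\<bar>f x\<bar> powr enn2real p) \<partial>lebesgue)
            in if I = top then top else ennreal (enn2real I powr (1 / enn2real p))))"

definition in_Lp :: "ennreal \<Rightarrow> ('a::euclidean_space \<Rightarrow> real) \<Rightarrow> bool" where
  "in_Lp p f \<longleftrightarrow> f \<in> borel_measurable lebesgue \<and> Lp_norm p f < top"

definition fin_diff :: "nat \<Rightarrow> 'a::euclidean_space \<Rightarrow> ('a \<Rightarrow> real) \<Rightarrow> 'a \<Rightarrow> real" where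
  "fin_diff M h f x = (\<Sum>j = 0..M. (-1) ^ (M - j) * real (M choose j) * f (x + real j *\<^sub>R h))"

definition mollifiers :: "(real \<Rightarrow> 'a::euclidean_space \<Rightarrow> real) \<Rightarrow> bool" where
  "mollifiers \<rho> \<longleftrightarrow>
     (\<forall>\<epsilon>>0. integrable lebesgue (\<rho> \<epsilon>) \<and> (\<forall>z. \<rho> \<epsilon> z \<ge> 0)
             \<and> (\<integral>z. \<rho> \<epsilon> z \<partial>lebesgue) = 1) \<and>
     (\<forall>\<delta>>0. ((\<lambda>\<epsilon>. \<integral>z. indicator {z. norm z \<ge> \<delta>} z * \<rho> \<epsilon> z \<partial>lebesgue)
              \<longlongrightarrow> 0) (at_right 0))"

definition C_inc_plus :: "(real \<Rightarrow> real) \<Rightarrow> bool" where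
  "C_inc_plus \<omega> \<longleftrightarrow>
     continuous_on {0..} \<omega> \<and> mono_on {0..} \<omega> \<and> \<omega> 0 = 0 \<and> (\<forall>t\<ge>0. \<omega> t \<ge> 0) \<and>
     filterlim \<omega> at_top at_top \<and>
     (\<exists>A>0. \<forall>t1\<ge>0. \<forall>t2\<ge>0. \<omega> (t1 + t2) \<le> A * (\<omega> t1 + \<omega> t2))"

definition omega_ext :: "(real \<Rightarrow> real) \<Rightarrow> ennreal \<Rightarrow> ennreal" where
  "omega_ext \<omega> x = (if x = top then top else ennreal (\<omega> (enn2real x)))"

definition diff_quot :: "ennreal \<Rightarrow> nat \<Rightarrow> real \<Rightarrow> ('a::euclidean_space \<Rightarrow> real) \<Rightarrow> 'a \<Rightarrow> ennreal" where
  "diff_quot p M s f h = ennreal (norm h powr (- s)) * Lp_norm p (fin_diff M h f)"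

definition D_omega :: "(real \<Rightarrow> real) \<Rightarrow> ennreal \<Rightarrow> nat \<Rightarrow> real \<Rightarrow> ('a::euclidean_space \<Rightarrow> real)
    \<Rightarrow> ('a \<Rightarrow> real) \<Rightarrow> ennreal" where
  "D_omega \<omega> p M s \<rho>\<epsilon> f = (\<integral>\<^sup>+ h. ennreal (\<rho>\<epsilon> h) * omega_ext \<omega> (diff_quot p M s f h) \<partial>lebesgue)"

end

theory Submission
  imports Defs
begin

lemma transl_distr:
  fixes a :: "'a::euclidean_space"
  shows "distr lebesgue lebesgue (\<lambda>x. a + x) = lebesgue"
    and "(\<lambda>x. a + x) \<in> lebesgue \<rightarrow>\<^sub>M lebesgue"
proof -
  have eq: "(\<lambda>x. a + (\<Sum>j\<in>Basis. (1 * (x \<bullet> j)) *\<^sub>R j)) = (\<lambda>x. a + x)"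
    by (simp add: euclidean_representation)
  have "lebesgue = density (distr lebesgue lebesgue (\<lambda>x. a + x)) (\<lambda>_. 1)"
    using lebesgue_affine_euclidean[of "\<lambda>_. 1" a] eq by simp
  then show "distr lebesgue lebesgue (\<lambda>x. a + x) = lebesgue"
    by (simp add: density_1)
  show "(\<lambda>x. a + x) \<in> lebesgue \<rightarrow>\<^sub>M lebesgue"
    using lebesgue_affine_measurable[of "\<lambda>_. 1" a] eq by simp
qed

lemma transl_nn_integral:
  fixes a :: "'a::euclidean_space" and g :: "'a \<Rightarrow> ennreal"
  assumes g: "g \<in> borel_measurable lebesgue"
  shows "(\<integral>\<^sup>+ x. g (a + x) \<partial>lebesgue) = (\<integral>\<^sup>+ x. g x \<partial>lebesgue)"
proof -
  have "(\<integral>\<^sup>+ x. g x \<partial>lebesgue) = (\<integral>\<^sup>+ x. g x \<partial>distr lebesgue lebesgue (\<lambda>x. a + x))"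
    using transl_distr(1)[of a] by simp
  also have "\<dots> = (\<integral>\<^sup>+ x. g (a + x) \<partial>lebesgue)"
    using transl_distr(2)[of a] g by (simp add: nn_integral_distr)
  finally show ?thesis by simp
qed

lemma transl_AE:
  fixes a :: "'a::euclidean_space"
  assumes "AE x in lebesgue. P x"
  shows "AE x in lebesgue. P (a + x)"
proof -
  obtain N where N: "{x \<in> space lebesgue. \<not> P x} \<subseteq> N" "N \<in> null_sets lebesgue"
    using assms unfolding eventually_ae_filter by blast
  have m: "(\<lambda>x. a + x) \<in> lebesgue \<rightarrow>\<^sub>M lebesgue" by (rule transl_distr(2))
  have Ns: "N \<in> sets lebesgue" using N(2) by (rule null_setsD2)
  have "emeasure lebesgue ((\<lambda>x. a + x) -` N \<inter> space lebesgue) = emeasure (distr lebesgue lebesgue (\<lambda>x. a + x)) N"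
    using m Ns by (rule emeasure_distr[symmetric])
  also have "\<dots> = emeasure lebesgue N" by (simp only: transl_distr(1))
  also have "\<dots> = 0" using N(2) by (rule null_setsD1)
  finally have z: "emeasure lebesgue ((\<lambda>x. a + x) -` N \<inter> space lebesgue) = 0" .
  have "(\<lambda>x. a + x) -` N \<inter> space lebesgue \<in> null_sets lebesgue"
    by (rule null_setsI[OF z measurable_sets[OF m Ns]])
  moreover have "{x \<in> space lebesgue. \<not> P (a + x)} \<subseteq> (\<lambda>x. a + x) -` N \<inter> space lebesgue"
    using N(1) by auto
  ultimately show ?thesis by (rule AE_I')
qed

lemma powr_sum_bound:
  fixes a :: "nat \<Rightarrow> real"
  assumes J: "finite J" "J \<noteq> {}" and a: "\<And>j. a j \<ge> 0" and q: "q > 0"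
  shows "(\<Sum>j\<in>J. a j) powr q \<le> real (card J) powr q * (\<Sum>j\<in>J. a j powr q)"
proof -
  have "Max (a ` J) \<in> a ` J" using J by (intro Max_in) auto
  then obtain m where m1: "m \<in> J" and mm: "a m = Max (a ` J)" by (metis imageE)
  have m2: "a j \<le> a m" if "j \<in> J" for j
    unfolding mm using J that by (intro Max_ge) auto
  have s1: "(\<Sum>j\<in>J. a j) \<le> real (card J) * a m"
    using sum_bounded_above[of J a "a m"] m2 by simp
  have s0: "0 \<le> (\<Sum>j\<in>J. a j)" using a by (simp add: sum_nonneg)
  have "(\<Sum>j\<in>J. a j) powr q \<le> (real (card J) * a m) powr q"
    using s1 s0 q by (simp add: powr_mono2)
  also have "\<dots> = real (card J) powr q * a m powr q"
    using a[of m] by (simp add: powr_mult)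
  also have "a m powr q \<le> (\<Sum>j\<in>J. a j powr q)"
    by (rule member_le_sum[OF m1 _ J(1)]) simp
  then have "real (card J) powr q * a m powr q \<le> real (card J) powr q * (\<Sum>j\<in>J. a j powr q)"
    by (rule mult_left_mono) simp
  finally show ?thesis .
qed

lemma fin_diff_bound:
  "\<bar>fin_diff M h f x\<bar> \<le> 2 ^ M * (\<Sum>j = 0..M. \<bar>f (x + real j *\<^sub>R h)\<bar>)"
proof -
  have "\<bar>fin_diff M h f x\<bar> \<le> (\<Sum>j = 0..M. \<bar>(-1) ^ (M - j) * real (M choose j) * f (x + real j *\<^sub>R h)\<bar>)"
    unfolding fin_diff_def by (rule sum_abs)
  also have "\<dots> \<le> (\<Sum>j = 0..M. 2 ^ M * \<bar>f (x + real j *\<^sub>R h)\<bar>)"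
  proof (intro sum_mono)
    fix j
    have "real (M choose j) \<le> 2 ^ M"
      using binomial_le_pow2[of M j] by (metis of_nat_le_iff of_nat_numeral of_nat_power)
    then show "\<bar>(-1) ^ (M - j) * real (M choose j) * f (x + real j *\<^sub>R h)\<bar> \<le> 2 ^ M * \<bar>f (x + real j *\<^sub>R h)\<bar>"
      by (simp add: abs_mult mult_right_mono)
  qed
  finally show ?thesis by (simp add: sum_distrib_left)
qed


lemma transl_meas:
  fixes f :: "'a::euclidean_space \<Rightarrow> real"
  assumes f: "f \<in> borel_measurable lebesgue"
  shows "(\<lambda>x. f (a + x)) \<in> borel_measurable lebesgue"
  using measurable_compose[OF transl_distr(2)[of a] f] by simp

lemma fin_diff_meas:
  fixes f :: "'a::euclidean_space \<Rightarrow> real"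
  assumes f: "f \<in> borel_measurable lebesgue"
  shows "fin_diff M h f \<in> borel_measurable lebesgue"
proof -
  have t: "(\<lambda>x. f (x + a)) \<in> borel_measurable lebesgue" for a
    using transl_meas[OF f, of a] by (simp add: add.commute)
  show ?thesis unfolding fin_diff_def[abs_def]
    by (intro borel_measurable_sum borel_measurable_times borel_measurable_const t)
qed

lemma Lp_bound:
  fixes f :: "'a::euclidean_space \<Rightarrow> real"
  assumes p1: "1 \<le> p" and fL: "in_Lp p f"
  shows "\<exists>K. K < top \<and> (\<forall>h. Lp_norm p (fin_diff M h f) \<le> K)"
proof (cases "p = top")
  case True
  have "Inf {C. AE x in lebesgue. ennreal \<bar>f x\<bar> \<le> C} < top"
    using fL True by (simp add: in_Lp_def Lp_norm_def)
  then obtain C where C: "AE x in lebesgue. ennreal \<bar>f x\<bar> \<le> C" "C < top"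
    by (auto simp: Inf_less_iff)
  obtain c where c: "C = ennreal c" "c \<ge> 0" using C(2) by (cases C rule: ennreal_cases) auto
  have fc: "AE x in lebesgue. \<bar>f x\<bar> \<le> c"
    using C(1) by eventually_elim (simp add: c ennreal_le_iff)
  show ?thesis
  proof (intro exI[of _ "ennreal (2^M * (real (M+1) * c))"] conjI allI)
    show "ennreal (2^M * (real (M+1) * c)) < top" by simp
    fix h
    have "AE x in lebesgue. \<forall>j\<in>{0..M}. \<bar>f (real j *\<^sub>R h + x)\<bar> \<le> c"
      by (rule AE_finite_allI) (auto intro: transl_AE[OF fc])
    then have "AE x in lebesgue. ennreal \<bar>fin_diff M h f x\<bar> \<le> ennreal (2^M * (real (M+1) * c))"
    proof eventually_elim
      case (elim x)
      have "(\<Sum>j=0..M. \<bar>f (x + real j *\<^sub>R h)\<bar>) \<le> (\<Sum>j=0..M. c)"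
        using elim by (intro sum_mono) (simp add: add.commute)
      then have "2^M * (\<Sum>j=0..M. \<bar>f (x + real j *\<^sub>R h)\<bar>) \<le> 2^M * (real (M+1) * c)"
        by (intro mult_left_mono) auto
      then have "\<bar>fin_diff M h f x\<bar> \<le> 2^M * (real (M+1) * c)"
        using fin_diff_bound[of M h f x] by linarith
      then show ?case by (intro ennreal_leI)
    qed
    then show "Lp_norm p (fin_diff M h f) \<le> ennreal (2^M * (real (M+1) * c))"
      unfolding Lp_norm_def using True by (auto intro: Inf_lower)
  qed
next
  case False
  define q where "q = enn2real p"
  have q1: "q \<ge> 1"
    using enn2real_mono[OF p1] False unfolding q_def by (simp add: less_top[symmetric])
  have fm: "f \<in> borel_measurable lebesgue" using fL by (simp add: in_Lp_def)
  define I where "I = (\<integral>\<^sup>+x. ennreal (\<bar>f x\<bar> powr q) \<partial>lebesgue)"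
  have I: "I \<noteq> top"
  proof
    assume "I = top"
    then have "Lp_norm p f = top" using False unfolding Lp_norm_def Let_def I_def q_def by simp
    then show False using fL by (simp add: in_Lp_def)
  qed
  obtain i where i: "I = ennreal i" "i \<ge> 0" using I by (cases I rule: ennreal_cases) auto
  define K0 where "K0 = (2^M) powr q * real (M+1) powr q"
  have K0: "K0 \<ge> 0" unfolding K0_def by simp
  have gm: "(\<lambda>x. ennreal (\<bar>f x\<bar> powr q)) \<in> borel_measurable lebesgue"
    using fm by measurable
  have bound: "(\<integral>\<^sup>+x. ennreal (\<bar>fin_diff M h f x\<bar> powr q) \<partial>lebesgue) \<le> ennreal (K0 * (real (M+1) * i))" for h
  proof -
    have "(\<integral>\<^sup>+x. ennreal (\<bar>fin_diff M h f x\<bar> powr q) \<partial>lebesgue)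
        \<le> (\<integral>\<^sup>+x. ennreal K0 * (\<Sum>j\<in>{0..M}. ennreal (\<bar>f (real j *\<^sub>R h + x)\<bar> powr q)) \<partial>lebesgue)"
    proof (rule nn_integral_mono)
      fix x
      let ?S = "\<Sum>j=0..M. \<bar>f (x + real j *\<^sub>R h)\<bar>"
      have "\<bar>fin_diff M h f x\<bar> powr q \<le> (2^M * ?S) powr q"
        by (rule powr_mono2) (use q1 fin_diff_bound[of M h f x] in auto)
      also have "\<dots> = (2^M) powr q * ?S powr q"
        by (simp add: powr_mult sum_nonneg)
      also have "\<dots> \<le> (2^M) powr q * (real (card {0..M}) powr q * (\<Sum>j=0..M. \<bar>f (x + real j *\<^sub>R h)\<bar> powr q))"
        by (intro mult_left_mono powr_sum_bound) (use q1 in auto)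
      also have "\<dots> = K0 * (\<Sum>j=0..M. \<bar>f (real j *\<^sub>R h + x)\<bar> powr q)"
        unfolding K0_def by (simp add: add.commute mult.assoc)
      finally have "ennreal (\<bar>fin_diff M h f x\<bar> powr q) \<le> ennreal (K0 * (\<Sum>j=0..M. \<bar>f (real j *\<^sub>R h + x)\<bar> powr q))"
        by (rule ennreal_leI)
      also have "\<dots> = ennreal K0 * (\<Sum>j\<in>{0..M}. ennreal (\<bar>f (real j *\<^sub>R h + x)\<bar> powr q))"
        using K0 by (simp add: ennreal_mult sum_nonneg)
      finally show "ennreal (\<bar>fin_diff M h f x\<bar> powr q) \<le> ennreal K0 * (\<Sum>j\<in>{0..M}. ennreal (\<bar>f (real j *\<^sub>R h + x)\<bar> powr q))" .
    qed
    also have "\<dots> = ennreal K0 * (\<Sum>j\<in>{0..M}. \<integral>\<^sup>+x. ennreal (\<bar>f (real j *\<^sub>R h + x)\<bar> powr q) \<partial>lebesgue)"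
    proof -
      have m: "(\<lambda>x. ennreal (\<bar>f (real j *\<^sub>R h + x)\<bar> powr q)) \<in> borel_measurable lebesgue" for j
        using measurable_compose[OF transl_distr(2)[of "real j *\<^sub>R h"] gm] by simp
      have ms: "(\<lambda>x. \<Sum>j\<in>{0..M}. ennreal (\<bar>f (real j *\<^sub>R h + x)\<bar> powr q)) \<in> borel_measurable lebesgue"
        by (intro borel_measurable_sum m)
      show ?thesis
        unfolding nn_integral_cmult[OF ms]
        by (subst nn_integral_sum) (use m in auto)
    qed
    also have "\<dots> = ennreal K0 * (\<Sum>j\<in>{0..M}. ennreal i)"
      unfolding i(1)[symmetric] I_def by (simp only: transl_nn_integral[OF gm])
    also have "\<dots> = ennreal (K0 * (real (M+1) * i))"
      using i K0 by (simp add: ennreal_mult ennreal_of_nat_eq_real_of_nat)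
    finally show ?thesis .
  qed
  show ?thesis
  proof (intro exI[of _ "ennreal ((K0 * (real (M+1) * i)) powr (1/q))"] conjI allI)
    show "ennreal ((K0 * (real (M+1) * i)) powr (1/q)) < top" by simp
    fix h
    define J where "J = (\<integral>\<^sup>+x. ennreal (\<bar>fin_diff M h f x\<bar> powr q) \<partial>lebesgue)"
    have B: "J \<le> ennreal (K0 * (real (M+1) * i))" using bound unfolding J_def .
    have "J < top" using B by (rule le_less_trans) simp
    then have Jt: "J \<noteq> top" by simp
    then obtain j where j: "J = ennreal j" "j \<ge> 0" by (cases J rule: ennreal_cases) auto
    have "j \<le> K0 * (real (M+1) * i)"
      using B j K0 i by (simp add: ennreal_le_iff)
    then have "j powr (1/q) \<le> (K0 * (real (M+1) * i)) powr (1/q)"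
      by (intro powr_mono2) (use q1 j in auto)
    moreover have "Lp_norm p (fin_diff M h f) = ennreal (enn2real J powr (1/q))"
      using False Jt unfolding Lp_norm_def Let_def J_def q_def by presburger
    ultimately show "Lp_norm p (fin_diff M h f) \<le> ennreal ((K0 * (real (M+1) * i)) powr (1/q))"
      using j by (simp add: ennreal_leI)
  qed
qed


lemma omega_mono:
  assumes om: "C_inc_plus \<omega>" and xy: "x \<le> y"
  shows "omega_ext \<omega> x \<le> omega_ext \<omega> y"
proof (cases "y = top")
  case True then show ?thesis by (simp add: omega_ext_def)
next
  case False
  then have yt: "y < top" by (simp add: less_top)
  then have "x \<noteq> top" using xy by auto
  moreover have "enn2real x \<le> enn2real y" using enn2real_mono[OF xy yt] .
  moreover have "mono_on {0..} \<omega>" using om by (simp add: C_inc_plus_def)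
  ultimately have "\<omega> (enn2real x) \<le> \<omega> (enn2real y)"
    by (intro mono_onD[of "{0..}" \<omega>]) auto
  then show ?thesis using False \<open>x \<noteq> top\<close>
    by (auto simp: omega_ext_def intro!: ennreal_leI)
qed

lemma omega_zero: "C_inc_plus \<omega> \<Longrightarrow> omega_ext \<omega> 0 = 0"
  by (simp add: omega_ext_def C_inc_plus_def)

lemma omega_real: "t \<ge> 0 \<Longrightarrow> omega_ext \<omega> (ennreal t) = ennreal (\<omega> t)"
  by (simp add: omega_ext_def)

lemma dq_zero: "diff_quot p M s f 0 = 0"
  by (simp add: diff_quot_def)

lemma rho_props:
  assumes "mollifiers \<rho>" "\<epsilon> > 0"
  shows "integrable lebesgue (\<rho> \<epsilon>)" "\<And>z. \<rho> \<epsilon> z \<ge> 0" "(\<integral>z. \<rho> \<epsilon> z \<partial>lebesgue) = 1"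
  using assms by (auto simp: mollifiers_def)

lemma rho_int:
  assumes "mollifiers \<rho>" "\<epsilon> > 0"
  shows "(\<integral>\<^sup>+h. ennreal (\<rho> \<epsilon> h) \<partial>lebesgue) = 1"
  using nn_integral_eq_integral[of lebesgue "\<rho> \<epsilon>"] rho_props[OF assms] by simp

theorem proposition6p1:
  fixes \<rho> :: "real \<Rightarrow> 'a::euclidean_space \<Rightarrow> real"
    and \<omega> :: "real \<Rightarrow> real" and f :: "'a \<Rightarrow> real"
    and M :: nat and s :: real and p :: ennreal
  assumes "M \<ge> 1" and "s > 0" and "1 \<le> p"
    and "mollifiers \<rho>" and "C_inc_plus \<omega>" and "in_Lp p f"
  shows "(Limsup (at_right 0) (\<lambda>\<epsilon>. D_omega \<omega> p M s (\<rho> \<epsilon>) f)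
           \<le> omega_ext \<omega> (Limsup (at 0) (diff_quot p M s f)))
         \<and> ((SUP \<epsilon>\<in>{0<..}. D_omega \<omega> p M s (\<rho> \<epsilon>) f)
           \<le> omega_ext \<omega> (SUP h\<in>-{0}. diff_quot p M s f h))"
proof
  have om: "C_inc_plus \<omega>" and mol: "mollifiers \<rho>" using assms by auto
  have ompos: "\<And>t. t \<ge> 0 \<Longrightarrow> \<omega> t \<ge> 0" using om by (simp add: C_inc_plus_def)
  obtain K where K: "K < top" "\<And>h. Lp_norm p (fin_diff M h f) \<le> K"
    using Lp_bound[OF assms(3,6), of M] by blast
  have rmeas: "(\<lambda>h. ennreal (\<rho> \<epsilon> h)) \<in> borel_measurable lebesgue" if "\<epsilon> > 0" for \<epsilon>
    using rho_props(1)[OF mol that] by (intro measurable_compose[OF _ measurable_ennreal]) auto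
  show "(SUP \<epsilon>\<in>{0<..}. D_omega \<omega> p M s (\<rho> \<epsilon>) f) \<le> omega_ext \<omega> (SUP h\<in>-{0}. diff_quot p M s f h)"
  proof (rule SUP_least)
    let ?S = "SUP h\<in>-{0}. diff_quot p M s f h"
    have dqS: "diff_quot p M s f h \<le> ?S" for h
      by (cases "h = 0") (auto simp: dq_zero intro: SUP_upper)
    fix \<epsilon> :: real assume "\<epsilon> \<in> {0<..}"
    then have e: "\<epsilon> > 0" by simp
    have "D_omega \<omega> p M s (\<rho> \<epsilon>) f \<le> (\<integral>\<^sup>+h. ennreal (\<rho> \<epsilon> h) * omega_ext \<omega> ?S \<partial>lebesgue)"
      unfolding D_omega_def by (intro nn_integral_mono mult_left_mono omega_mono[OF om] dqS) auto
    also have "\<dots> = omega_ext \<omega> ?S"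
      using nn_integral_multc[OF rmeas[OF e], of "omega_ext \<omega> ?S"] rho_int[OF mol e] by simp
    finally show "D_omega \<omega> p M s (\<rho> \<epsilon>) f \<le> omega_ext \<omega> ?S" .
  qed
  let ?L = "Limsup (at 0) (diff_quot p M s f)"
  show "Limsup (at_right 0) (\<lambda>\<epsilon>. D_omega \<omega> p M s (\<rho> \<epsilon>) f) \<le> omega_ext \<omega> ?L"
  proof (cases "?L = top")
    case True then show ?thesis by (simp add: omega_ext_def)
  next
    case False
    then obtain l where l: "?L = ennreal l" "l \<ge> 0" by (cases ?L rule: ennreal_cases) auto
    have "Limsup (at_right 0) (\<lambda>\<epsilon>. D_omega \<omega> p M s (\<rho> \<epsilon>) f) \<le> ennreal (\<omega> l)"
    proof (rule ennreal_le_epsilon)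
      fix e :: real assume e: "0 < e"
      have "continuous_on {0..} \<omega>" using om by (simp add: C_inc_plus_def)
      then obtain d where d: "d > 0" "\<And>x. x \<in> {0..} \<Longrightarrow> dist x l < d \<Longrightarrow> dist (\<omega> x) (\<omega> l) < e/2"
        unfolding continuous_on_iff using l(2) e by (metis atLeast_iff half_gt_zero)
      define t where "t = l + d/2"
      have t: "t > l" "t \<ge> 0" using d l unfolding t_def by auto
      have "dist (\<omega> t) (\<omega> l) < e/2" using d t unfolding t_def by (auto simp: dist_real_def)
      then have wt: "\<omega> t \<le> \<omega> l + e/2" unfolding dist_real_def by (simp only: abs_less_iff) linarith
      have "?L < ennreal t" using l t by (simp add: ennreal_lessI)
      then have "eventually (\<lambda>h. diff_quot p M s f h < ennreal t) (at 0)"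
        by (rule Limsup_lessD)
      then obtain \<delta> where \<delta>: "\<delta> > 0" "\<And>h. h \<noteq> 0 \<Longrightarrow> dist h 0 < \<delta> \<Longrightarrow> diff_quot p M s f h < ennreal t"
        unfolding eventually_at by auto
      define C' where "C' = ennreal (\<delta> powr (-s)) * K"
      have "C' < top" unfolding C'_def using K(1) by (simp add: ennreal_mult_less_top)
      then obtain c where c: "C' = ennreal c" "c \<ge> 0" by (cases C' rule: ennreal_cases) auto
      have far: "diff_quot p M s f h \<le> ennreal c" if "norm h \<ge> \<delta>" for h
      proof -
        have "norm h powr (-s) \<le> \<delta> powr (-s)"
          by (rule powr_mono2') (use that \<delta> assms(2) in auto)
        then have "ennreal (norm h powr (-s)) * Lp_norm p (fin_diff M h f) \<le> ennreal (\<delta> powr (-s)) * K"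
          by (intro mult_mono ennreal_leI K(2)) auto
        then show ?thesis unfolding diff_quot_def c(1)[symmetric] C'_def .
      qed
      have pw: "omega_ext \<omega> (diff_quot p M s f h) \<le> ennreal (\<omega> t + indicator {z. norm z \<ge> \<delta>} h * \<omega> c)" for h
      proof (cases "h = 0")
        case True then show ?thesis by (simp add: dq_zero omega_zero[OF om])
      next
        case h0: False
        show ?thesis
        proof (cases "norm h \<ge> \<delta>")
          case True
          have "omega_ext \<omega> (diff_quot p M s f h) \<le> omega_ext \<omega> (ennreal c)"
            by (rule omega_mono[OF om far[OF True]])
          also have "\<dots> = ennreal (\<omega> c)" using c by (simp add: omega_real)
          also have "\<dots> \<le> ennreal (\<omega> t + indicator {z. norm z \<ge> \<delta>} h * \<omega> c)"
            using True ompos[OF t(2)] by (intro ennreal_leI) simp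
          finally show ?thesis .
        next
          case False
          have "omega_ext \<omega> (diff_quot p M s f h) \<le> omega_ext \<omega> (ennreal t)"
            using \<delta>(2)[OF h0] False by (intro omega_mono[OF om] less_imp_le) simp
          also have "\<dots> = ennreal (\<omega> t)" using t by (simp add: omega_real)
          also have "\<dots> \<le> ennreal (\<omega> t + indicator {z. norm z \<ge> \<delta>} h * \<omega> c)"
            using False by simp
          finally show ?thesis .
        qed
      qed
      define tail where "tail \<epsilon> = (\<integral>z. indicator {z. norm z \<ge> \<delta>} z * \<rho> \<epsilon> z \<partial>lebesgue)" for \<epsilon>
      have tl: "(tail \<longlongrightarrow> 0) (at_right 0)"
        using mol \<delta>(1) unfolding mollifiers_def tail_def by blast
      have "((\<lambda>\<epsilon>. \<omega> c * tail \<epsilon>) \<longlongrightarrow> \<omega> c * 0) (at_right 0)"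
        by (intro tendsto_mult tendsto_const tl)
      then have ev1: "eventually (\<lambda>\<epsilon>. \<omega> c * tail \<epsilon> < e/2) (at_right 0)"
        by (rule order_tendstoD) (use e in simp)
      have ev2: "eventually (\<lambda>\<epsilon>. \<epsilon> > 0) (at_right (0::real))"
        by (rule eventually_at_right_less)
      have Sset: "{z::'a. norm z \<ge> \<delta>} \<in> sets lebesgue"
      proof -
        have "closed {z::'a. norm z \<ge> \<delta>}" by (intro closed_Collect_le continuous_intros)
        then show ?thesis by simp
      qed
      have "eventually (\<lambda>\<epsilon>. D_omega \<omega> p M s (\<rho> \<epsilon>) f \<le> ennreal (\<omega> l) + ennreal e) (at_right 0)"
        using ev1 ev2
      proof eventually_elim
        case (elim \<epsilon>)
        note r = rho_props[OF mol elim(2)]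
        have int1: "integrable lebesgue (\<lambda>z. indicator {z. norm z \<ge> \<delta>} z * \<rho> \<epsilon> z)"
          using integrable_real_mult_indicator[OF Sset r(1)] by (simp add: mult.commute)
        have tnn: "tail \<epsilon> \<ge> 0" unfolding tail_def using r(2) by (intro integral_nonneg_AE) auto
        let ?g = "\<lambda>h. \<rho> \<epsilon> h * \<omega> t + \<omega> c * (indicator {z. norm z \<ge> \<delta>} h * \<rho> \<epsilon> h)"
        have gint: "integrable lebesgue ?g"
          using r(1) int1 by (intro Bochner_Integration.integrable_add) simp_all
        have "D_omega \<omega> p M s (\<rho> \<epsilon>) f \<le> (\<integral>\<^sup>+h. ennreal (?g h) \<partial>lebesgue)"
          unfolding D_omega_def
        proof (rule nn_integral_mono)
          fix h
          have "ennreal (\<rho> \<epsilon> h) * omega_ext \<omega> (diff_quot p M s f h)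
              \<le> ennreal (\<rho> \<epsilon> h) * ennreal (\<omega> t + indicator {z. norm z \<ge> \<delta>} h * \<omega> c)"
            by (intro mult_left_mono pw) auto
          also have "\<dots> = ennreal (\<rho> \<epsilon> h * (\<omega> t + indicator {z. norm z \<ge> \<delta>} h * \<omega> c))"
            using r(2)[of h] by (rule ennreal_mult'[symmetric])
          also have "\<rho> \<epsilon> h * (\<omega> t + indicator {z. norm z \<ge> \<delta>} h * \<omega> c) = ?g h"
            by (simp add: algebra_simps)
          finally show "ennreal (\<rho> \<epsilon> h) * omega_ext \<omega> (diff_quot p M s f h) \<le> ennreal (?g h)" .
        qed
        also have "\<dots> = ennreal (integral\<^sup>L lebesgue ?g)"
        proof (rule nn_integral_eq_integral[OF gint])
          show "AE x in lebesgue. 0 \<le> ?g x"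
            using r(2) ompos[OF t(2)] ompos[OF c(2)] by (intro AE_I2 add_nonneg_nonneg mult_nonneg_nonneg) auto
        qed
        also have "integral\<^sup>L lebesgue ?g = \<omega> t + \<omega> c * tail \<epsilon>"
          using r int1 unfolding tail_def by (simp add: Bochner_Integration.integral_add)
        also have "ennreal (\<omega> t + \<omega> c * tail \<epsilon>) \<le> ennreal (\<omega> l + e)"
          using wt elim(1) by (intro ennreal_leI) linarith
        also have "\<dots> = ennreal (\<omega> l) + ennreal e"
          using ompos[OF l(2)] e by (simp add: ennreal_plus)
        finally show ?case .
      qed
      then show "Limsup (at_right 0) (\<lambda>\<epsilon>. D_omega \<omega> p M s (\<rho> \<epsilon>) f) \<le> ennreal (\<omega> l) + ennreal e"
        by (rule Limsup_bounded)
    qed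
    then show ?thesis using l by (simp add: omega_ext_def)
  qed
qed

end
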